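(* Let $M=(Q,c_1,c_2)$ be a Minsky machine with instruction sequence $Q=(q_1,\dots,q_N)$, and let $T_{\mathrm{comp}}$ be the product transition system over variables $\{pc,x,z_1,z_2,y_1,y_2,c_1,c_2,q\}$ with $\mathit{Init}_{\mathrm{comp}} := \mathit{Init}\wedge c_1=0\wedge c_2=0\wedge q=1$ and $\mathit{TR}_{\mathrm{comp}} := q\neq N\wedge \mathit{TR}\wedge \mathit{TR}_M$, where $\mathit{Init},\mathit{TR}$ are those of $T_{\mathrm{Prog}}$ and $\mathit{TR}_M$ is the QFLIA formula over $\{c_1,c_2,q,c_1',c_2',q'\}$ encoding one step of $M$ (as a disjunction over $j\in\{1,\dots,N-1\}$ of $q=j$ conjoined with the effect of instruction $q_j$). In each step the product thus performs one step of $T_{\mathrm{Prog}}$ and one step of $M$ simultaneously, and it has no transitions once $M$ is at its halting instruction $q_N$. Let $P := (pc=\mathrm{end})\to(y_2=2y_1)$. Then $T_{\mathrm{comp}}$ has an inductive invariant that is a QFLIA formula over its variables if and only if $M$ halts (i.e., the run of $M$ from $c_1=c_2=0$ at instruction $q_1$ reaches $q_N$).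
   Context: QFLIA (quantifier-free linear integer arithmetic) formulas are built from integer-valued variables, integer constants, addition, multiplication by integer constants, the relations $=,<,\le$, and Boolean connectives, with no quantifiers; all variables range over $\mathbb{Z}$. A transition system is a tuple $T=(V,\mathit{Init},\mathit{TR})$ where $V$ is a finite set of integer variables, $\mathit{Init}$ is a QFLIA formula over $V$, and $\mathit{TR}$ is a QFLIA formula over $V\uplus V'$, where $V'=\{v' : v\in V\}$ is a primed copy of $V$. A state is an assignment $V\to\mathbb{Z}$. The initial states are those satisfying $\mathit{Init}$. A pair of states $(s,t)$ is a transition if $\mathit{TR}$ holds when unprimed variables take their values from $s$ and primed variables from $t$. Reachable states are those reachable from an initial state by finitely many transitions. A safety property is a QFLIA formula $P$ over $V$. We write $T\models P$ if every reachable state satisfies $P$. An inductive invariant for $T$ and $P$ is a formula $I$ over $V$ such that: (i) $\mathit{Init}\to I$ is valid; (ii) $I\wedge \mathit{TR}\to I'$ is valid, where $I'$ is obtained from $I$ by replacing each $v\in V$ with $v'$; and (iii) $I\to P$ is valid. A Minsky (2-counter) machine $M=(Q,c_1,c_2)$ has two counters $c_1,c_2$ ranging over $\mathbb{N}$, both initially $0$, and a finite instruction sequence $Q=(q_1,\dots,q_N)$, where $q_1$ is the first instruction and $q_N$ is the halting instruction. Each other instruction is one of: $i_k$ (increment $c_k$), $d_k$ (decrement $c_k$; if $c_k=0$ it stays $0$), or $t_k(j)$ (if $c_k=0$ go to instruction $j$). After each instruction control passes to the next instruction, except when a test $t_k(j)$ finds $c_k=0$, in which case control passes to instruction $j$.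 The transition system $T_{\mathrm{Prog}}$ has variables $pc,x,z_1,z_2,y_1,y_2$, with locations encoded as integers $\mathrm{start}=0$, $\mathrm{loop}_1=1$, $\mathrm{loop}_2=2$, $\mathrm{end}=3$. Its initial formula is $\mathit{Init} := pc=\mathrm{start}\wedge x>0\wedge z_1=x\wedge z_2=2x\wedge y_1=0\wedge y_2=0$. Its transition formula $\mathit{TR}$ is the disjunction of the following cases, where in each case every variable of $T_{\mathrm{Prog}}$ not mentioned keeps its value: (1) $pc\in\{\mathrm{start},\mathrm{loop}_1\}\wedge z_1>0\wedge pc'=\mathrm{loop}_1\wedge z_1'=z_1-1\wedge y_1'=y_1+x$; (2) $pc\in\{\mathrm{start},\mathrm{loop}_1\}\wedge z_1\le 0\wedge pc'=\mathrm{loop}_2$; (3) $pc=\mathrm{loop}_2\wedge z_2>0\wedge pc'=\mathrm{loop}_2\wedge z_2'=z_2-1\wedge y_2'=y_2+x$; (4) $pc=\mathrm{loop}_2\wedge z_2\le 0\wedge pc'=\mathrm{end}$; (5) $pc=\mathrm{end}\wedge pc'=\mathrm{end}$. This encodes the program that, on input $x>0$, adds $x$ to $y_1$ exactly $x$ times, then adds $x$ to $y_2$ exactly $2x$ times, and then stays at $\mathrm{end}$. *)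

theory Defs
  imports Main
begin

datatype 'v lterm =
    LVar 'v
  | LConst int
  | LAdd "'v lterm" "'v lterm"
  | LMul int "'v lterm"

datatype 'v qf =
    FTrue
  | FFalse
  | FEq "'v lterm" "'v lterm"
  | FLt "'v lterm" "'v lterm"
  | FLe "'v lterm" "'v lterm"
  | FNot "'v qf"
  | FAnd "'v qf" "'v qf"
  | FOr "'v qf" "'v qf"

primrec tval :: "('v \<Rightarrow> int) \<Rightarrow> 'v lterm \<Rightarrow> int" where
  "tval s (LVar v) = s v"
| "tval s (LConst c) = c"
| "tval s (LAdd a b) = tval s a + tval s b"
| "tval s (LMul c a) = c * tval s a"

primrec holds :: "('v \<Rightarrow> int) \<Rightarrow> 'v qf \<Rightarrow> bool" where
  "holds s FTrue = True"
| "holds s FFalse = False"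
| "holds s (FEq a b) = (tval s a = tval s b)"
| "holds s (FLt a b) = (tval s a < tval s b)"
| "holds s (FLe a b) = (tval s a \<le> tval s b)"
| "holds s (FNot f) = (\<not> holds s f)"
| "holds s (FAnd f g) = (holds s f \<and> holds s g)"
| "holds s (FOr f g) = (holds s f \<or> holds s g)"

definition FImp :: "'v qf \<Rightarrow> 'v qf \<Rightarrow> 'v qf" where
  "FImp f g = FOr (FNot f) g"

fun FOrs :: "'v qf list \<Rightarrow> 'v qf" where
  "FOrs [] = FFalse"
| "FOrs (f # fs) = FOr f (FOrs fs)"

definition valid :: "'v qf \<Rightarrow> bool" where
  "valid f \<longleftrightarrow> (\<forall>s. holds s f)"

text \<open>Variables of \<open>V \<uplus> V'\<close>: \<open>Cur v\<close> is \<open>v\<close>, \<open>Nxt v\<close> is \<open>v'\<close>.\<close>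
datatype 'v primed = Cur 'v | Nxt 'v

text \<open>A transition system is given by \<open>Init\<close> (over \<open>V\<close>) and \<open>TR\<close> (over \<open>V \<uplus> V'\<close>);
  \<open>V\<close> is the (finite) variable type \<open>'v\<close>.\<close>
definition inductive_invariant :: "'v qf \<Rightarrow> 'v primed qf \<Rightarrow> 'v qf \<Rightarrow> 'v qf \<Rightarrow> bool" where
  "inductive_invariant Init TR P I \<longleftrightarrow>
     valid (FImp Init I) \<and>
     valid (FImp (FAnd (map_qf Cur I) TR) (map_qf Nxt I)) \<and>
     valid (FImp I P)"

datatype var = PC | X | Z1 | Z2 | Y1 | Y2 | C1 | C2 | Q

abbreviation cv :: "var \<Rightarrow> var primed lterm" where "cv v \<equiv> LVar (Cur v)"
abbreviation nv :: "var \<Rightarrow> var primed lterm" where "nv v \<equiv> LVar (Nxt v)"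
abbreviation uv :: "var \<Rightarrow> var lterm" where "uv v \<equiv> LVar v"
abbreviation ic :: "int \<Rightarrow> 'v lterm" where "ic c \<equiv> LConst c"

text \<open>Locations: start = 0, loop1 = 1, loop2 = 2, end = 3.\<close>

definition Init_prog :: "var qf" where
  "Init_prog =
     FAnd (FEq (uv PC) (ic 0))
    (FAnd (FLt (ic 0) (uv X))
    (FAnd (FEq (uv Z1) (uv X))
    (FAnd (FEq (uv Z2) (LMul 2 (uv X)))
    (FAnd (FEq (uv Y1) (ic 0))
          (FEq (uv Y2) (ic 0))))))"

abbreviation keep :: "var \<Rightarrow> var primed qf" where
  "keep v \<equiv> FEq (nv v) (cv v)"

definition TR_prog :: "var primed qf" where
  "TR_prog = FOrs [
     \<comment> \<open>(1)\<close>
     FAnd (FOr (FEq (cv PC) (ic 0)) (FEq (cv PC) (ic 1)))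
    (FAnd (FLt (ic 0) (cv Z1))
    (FAnd (FEq (nv PC) (ic 1))
    (FAnd (FEq (nv Z1) (LAdd (cv Z1) (ic (-1))))
    (FAnd (FEq (nv Y1) (LAdd (cv Y1) (cv X)))
    (FAnd (keep X) (FAnd (keep Z2) (keep Y2))))))),
     \<comment> \<open>(2)\<close>
     FAnd (FOr (FEq (cv PC) (ic 0)) (FEq (cv PC) (ic 1)))
    (FAnd (FLe (cv Z1) (ic 0))
    (FAnd (FEq (nv PC) (ic 2))
    (FAnd (keep X) (FAnd (keep Z1) (FAnd (keep Z2) (FAnd (keep Y1) (keep Y2))))))),
     \<comment> \<open>(3)\<close>
     FAnd (FEq (cv PC) (ic 2))
    (FAnd (FLt (ic 0) (cv Z2))
    (FAnd (FEq (nv PC) (ic 2))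
    (FAnd (FEq (nv Z2) (LAdd (cv Z2) (ic (-1))))
    (FAnd (FEq (nv Y2) (LAdd (cv Y2) (cv X)))
    (FAnd (keep X) (FAnd (keep Z1) (keep Y1))))))),
     \<comment> \<open>(4)\<close>
     FAnd (FEq (cv PC) (ic 2))
    (FAnd (FLe (cv Z2) (ic 0))
    (FAnd (FEq (nv PC) (ic 3))
    (FAnd (keep X) (FAnd (keep Z1) (FAnd (keep Z2) (FAnd (keep Y1) (keep Y2))))))),
     \<comment> \<open>(5)\<close>
     FAnd (FEq (cv PC) (ic 3))
    (FAnd (FEq (nv PC) (ic 3))
    (FAnd (keep X) (FAnd (keep Z1) (FAnd (keep Z2) (FAnd (keep Y1) (keep Y2))))))]"

datatype ctr = K1 | K2

text \<open>Non-halting instructions: increment, decrement, test-for-zero-and-jump.\<close>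
datatype instr = Inc ctr | Dec ctr | Tst ctr nat

text \<open>A Minsky machine \<open>Q = (q_1,\<dots>,q_N)\<close> is represented by the list \<open>[q_1,\<dots>,q_{N-1}]\<close>
  of its non-halting instructions; \<open>q_N\<close> is the halting instruction, \<open>N = length + 1\<close>.\<close>
type_synonym minsky = "instr list"

definition mN :: "minsky \<Rightarrow> nat" where
  "mN M = length M + 1"

definition wf_minsky :: "minsky \<Rightarrow> bool" where
  "wf_minsky M \<longleftrightarrow> (\<forall>i < length M. \<forall>k j. M ! i = Tst k j \<longrightarrow> 1 \<le> j \<and> j \<le> mN M)"

fun getc :: "ctr \<Rightarrow> nat \<times> nat \<Rightarrow> nat" where
  "getc K1 (a, b) = a"
| "getc K2 (a, b) = b"

fun updc :: "ctr \<Rightarrow> nat \<Rightarrow> nat \<times> nat \<Rightarrow> nat \<times> nat" where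
  "updc K1 v (a, b) = (v, b)"
| "updc K2 v (a, b) = (a, v)"

text \<open>Configurations \<open>(current instruction index, (c_1, c_2))\<close>; one step of \<open>M\<close>.\<close>
definition minsky_step :: "minsky \<Rightarrow> nat \<times> (nat \<times> nat) \<Rightarrow> nat \<times> (nat \<times> nat) \<Rightarrow> bool" where
  "minsky_step M cf cf' \<longleftrightarrow>
     (let (q, c) = cf in
      1 \<le> q \<and> q < mN M \<and>
      (case M ! (q - 1) of
         Inc k \<Rightarrow> cf' = (q + 1, updc k (getc k c + 1) c)
       | Dec k \<Rightarrow> cf' = (q + 1, updc k (getc k c - 1) c)
       | Tst k j \<Rightarrow> cf' = (if getc k c = 0 then j else q + 1, c)))"

definition halts :: "minsky \<Rightarrow> bool" where
  "halts M \<longleftrightarrow> (\<exists>c. (minsky_step M)\<^sup>*\<^sup>* (1, (0, 0)) (mN M, c))"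

fun cvar :: "ctr \<Rightarrow> var" where
  "cvar K1 = C1"
| "cvar K2 = C2"

fun other :: "ctr \<Rightarrow> ctr" where
  "other K1 = K2"
| "other K2 = K1"

fun instr_fml :: "nat \<Rightarrow> instr \<Rightarrow> var primed qf" where
  "instr_fml j (Inc k) =
     FAnd (FEq (nv (cvar k)) (LAdd (cv (cvar k)) (ic 1)))
    (FAnd (keep (cvar (other k)))
          (FEq (nv Q) (ic (int j + 1))))"
| "instr_fml j (Dec k) =
     FAnd (FOr (FAnd (FEq (cv (cvar k)) (ic 0)) (FEq (nv (cvar k)) (ic 0)))
               (FAnd (FNot (FEq (cv (cvar k)) (ic 0))) (FEq (nv (cvar k)) (LAdd (cv (cvar k)) (ic (-1))))))
    (FAnd (keep (cvar (other k)))
          (FEq (nv Q) (ic (int j + 1))))"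
| "instr_fml j (Tst k t) =
     FAnd (FOr (FAnd (FEq (cv (cvar k)) (ic 0)) (FEq (nv Q) (ic (int t))))
               (FAnd (FNot (FEq (cv (cvar k)) (ic 0))) (FEq (nv Q) (ic (int j + 1)))))
    (FAnd (keep C1) (keep C2))"

definition TR_M :: "minsky \<Rightarrow> var primed qf" where
  "TR_M M = FOrs (map (\<lambda>j. FAnd (FEq (cv Q) (ic (int j))) (instr_fml j (M ! (j - 1)))) [1..<mN M])"

definition Init_comp :: "var qf" where
  "Init_comp = FAnd Init_prog (FAnd (FEq (uv C1) (ic 0)) (FAnd (FEq (uv C2) (ic 0)) (FEq (uv Q) (ic 1))))"

definition TR_comp :: "minsky \<Rightarrow> var primed qf" where
  "TR_comp M = FAnd (FNot (FEq (cv Q) (ic (int (mN M))))) (FAnd TR_prog (TR_M M))"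

definition P_prop :: "var qf" where
  "P_prop = FImp (FEq (uv PC) (ic 3)) (FEq (uv Y2) (LMul 2 (uv Y1)))"

end

theory Submission
  imports Defs
begin


lemma tval_map[simp]: "tval s (map_lterm f t) = tval (\<lambda>a. s (f a)) t"
  by (induction t) auto
lemma holds_map[simp]: "holds s (map_qf f p) = holds (\<lambda>a. s (f a)) p"
  by (induction p) auto
lemma holds_FOrs[simp]: "holds s (FOrs fs) = (\<exists>f\<in>set fs. holds s f)"
  by (induction fs) auto
lemma holds_FImp[simp]: "holds s (FImp a b) = (holds s a \<longrightarrow> holds s b)"
  by (simp add: FImp_def)

definition pstep :: "(var \<Rightarrow> int) \<Rightarrow> (var \<Rightarrow> int)" where
"pstep p = (if (p PC = 0 \<or> p PC = 1) then (if p Z1 > 0 then p(PC := 1, Z1 := p Z1 - 1, Y1 := p Y1 + p X) else p(PC := 2))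
 else if p PC = 2 then (if p Z2 > 0 then p(Z2 := p Z2 - 1, Y2 := p Y2 + p X) else p(PC := 3)) else p)"

definition progeq :: "(var \<Rightarrow> int) \<Rightarrow> (var \<Rightarrow> int) \<Rightarrow> bool" where
"progeq s p = (s PC = p PC \<and> s X = p X \<and> s Z1 = p Z1 \<and> s Z2 = p Z2 \<and> s Y1 = p Y1 \<and> s Y2 = p Y2)"

lemma TR_prog_conv:
  assumes "holds ps TR_prog" shows "progeq (ps \<circ> Nxt) (pstep (ps \<circ> Cur))"
  using assms unfolding TR_prog_def progeq_def pstep_def by (auto)

lemma TR_prog_fwd:
  assumes "progeq (ps \<circ> Nxt) (pstep (ps \<circ> Cur))" "0 \<le> ps (Cur PC)" "ps (Cur PC) \<le> 3"
  shows "holds ps TR_prog"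
  using assms unfolding TR_prog_def progeq_def pstep_def by (auto split: if_splits)

definition mnext :: "minsky \<Rightarrow> nat \<times> (nat \<times> nat) \<Rightarrow> nat \<times> (nat \<times> nat)" where
"mnext M cf = (let (q, c) = cf in if 1 \<le> q \<and> q < mN M then
      (case M ! (q - 1) of
         Inc k \<Rightarrow> (q + 1, updc k (getc k c + 1) c)
       | Dec k \<Rightarrow> (q + 1, updc k (getc k c - 1) c)
       | Tst k j \<Rightarrow> (if getc k c = 0 then j else q + 1, c)) else cf)"

lemma minsky_step_iff: "minsky_step M a b \<longleftrightarrow> (1 \<le> fst a \<and> fst a < mN M \<and> b = mnext M a)"
  unfolding minsky_step_def mnext_def by (cases a) (auto split: instr.splits)

definition confeq :: "(var \<Rightarrow> int) \<Rightarrow> nat \<times> (nat \<times> nat) \<Rightarrow> bool" where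
"confeq s cf = (s Q = int (fst cf) \<and> s C1 = int (fst (snd cf)) \<and> s C2 = int (snd (snd cf)))"

lemma TR_M_conv:
  assumes "holds ps (TR_M M)" "confeq (\<lambda>v. ps (Cur v)) a" "1 \<le> fst a" "fst a < mN M"
  shows "confeq (\<lambda>v. ps (Nxt v)) (mnext M a)"
proof -
  obtain q c1 c2 where a: "a = (q,(c1,c2))" by (cases a) auto
  from assms(1) obtain j where j: "j \<in> set [1..<mN M]" "holds ps (FAnd (FEq (cv Q) (ic (int j))) (instr_fml j (M ! (j - 1))))"
    unfolding TR_M_def by auto
  have jq: "j = q" using j(2) assms(2) a by (simp add: confeq_def)
  show ?thesis
  proof (cases "M ! (q - 1)")
    case (Inc k) then show ?thesis using j(2) assms(2-4) unfolding jq a by (cases k) (auto simp: confeq_def mnext_def)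
  next
    case (Dec k) then show ?thesis using j(2) assms(2-4) unfolding jq a by (cases k) (auto simp: confeq_def mnext_def of_nat_diff)
  next
    case (Tst k t) then show ?thesis using j(2) assms(2-4) unfolding jq a by (cases k) (auto simp: confeq_def mnext_def)
  qed
qed

lemma TR_M_fwd:
  assumes "confeq (\<lambda>v. ps (Nxt v)) (mnext M a)" "confeq (\<lambda>v. ps (Cur v)) a" "1 \<le> fst a" "fst a < mN M"
  shows "holds ps (TR_M M)"
proof -
  obtain q c1 c2 where a: "a = (q,(c1,c2))" by (cases a) auto
  have "holds ps (FAnd (FEq (cv Q) (ic (int q))) (instr_fml q (M ! (q - 1))))"
  proof (cases "M ! (q - 1)")
    case (Inc k) then show ?thesis using assms unfolding a by (cases k) (auto simp: confeq_def mnext_def)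
  next
    case (Dec k) then show ?thesis using assms unfolding a by (cases k) (auto simp: confeq_def mnext_def of_nat_diff)
  next
    case (Tst k t) then show ?thesis using assms unfolding a by (cases k) (auto simp: confeq_def mnext_def)
  qed
  moreover have "q \<in> set [1..<mN M]" using assms a by auto
  ultimately show ?thesis unfolding TR_M_def by auto
qed

definition cf :: "minsky \<Rightarrow> nat \<Rightarrow> nat \<times> (nat \<times> nat)" where
  "cf M k = (mnext M ^^ k) (1,(0,0))"

lemma cf_Suc: "cf M (Suc k) = mnext M (cf M k)"
  by (simp add: cf_def)
lemma cf_0: "cf M 0 = (1,(0,0))"
  by (simp add: cf_def)

lemma cf_range: assumes "wf_minsky M" shows "1 \<le> fst (cf M k) \<and> fst (cf M k) \<le> mN M"
proof (induction k)
  case 0 then show ?case by (simp add: cf_0 mN_def)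
next
  case (Suc k)
  obtain q c where qc: "cf M k = (q, c)" by (cases "cf M k") auto
  show ?case
  proof (cases "1 \<le> q \<and> q < mN M")
    case True
    then have "q - 1 < length M" by (auto simp: mN_def)
    then show ?thesis using True assms unfolding cf_Suc qc mnext_def wf_minsky_def
      by (cases "M ! (q - 1)") auto
  next
    case False then show ?thesis using Suc unfolding cf_Suc qc mnext_def by auto
  qed
qed

lemma star_cf: "(minsky_step M)\<^sup>*\<^sup>* (1,(0,0)) y \<Longrightarrow> \<exists>k. y = cf M k"
proof (induction rule: rtranclp_induct)
  case base then show ?case by (metis cf_0)
next
  case (step y z)
  then obtain k where "y = cf M k" by auto
  then show ?case using step(2) by (metis minsky_step_iff cf_Suc)
qed

lemma halts_cf: "halts M \<Longrightarrow> \<exists>k. fst (cf M k) = mN M"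
  unfolding halts_def by (metis star_cf fst_conv)

lemma nohalt_cf: assumes "wf_minsky M" "\<not> halts M"
  shows "fst (cf M k) < mN M \<and> (minsky_step M)\<^sup>*\<^sup>* (1,(0,0)) (cf M k)"
proof (induction k)
  case 0
  have "fst (cf M 0) \<noteq> mN M" using assms(2) unfolding halts_def by (metis cf_0 prod.collapse rtranclp.rtrancl_refl)
  then show ?case using cf_range[OF assms(1), of 0] by (simp add: cf_0)
next
  case (Suc k)
  have "minsky_step M (cf M k) (cf M (Suc k))" using Suc cf_range[OF assms(1), of k] by (simp add: minsky_step_iff cf_Suc)
  then have st: "(minsky_step M)\<^sup>*\<^sup>* (1,(0,0)) (cf M (Suc k))" using Suc by auto
  then have "fst (cf M (Suc k)) \<noteq> mN M" using assms(2) unfolding halts_def by (metis prod.collapse)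
  then show ?case using st cf_range[OF assms(1), of "Suc k"] by auto
qed

definition init :: "int \<Rightarrow> var \<Rightarrow> int" where
  "init x = (\<lambda>v. case v of PC \<Rightarrow> 0 | X \<Rightarrow> x | Z1 \<Rightarrow> x | Z2 \<Rightarrow> 2*x | _ \<Rightarrow> 0)"
definition run :: "int \<Rightarrow> nat \<Rightarrow> var \<Rightarrow> int" where
  "run x k = (pstep ^^ k) (init x)"
definition gen :: "int \<Rightarrow> nat \<Rightarrow> var \<Rightarrow> int" where
  "gen x k = (\<lambda>v. case v of PC \<Rightarrow> (if k = 0 then 0 else 1) | X \<Rightarrow> x | Z1 \<Rightarrow> x - int k | Z2 \<Rightarrow> 2*x
      | Y1 \<Rightarrow> int k * x | _ \<Rightarrow> 0)"

lemma run_Suc: "run x (Suc k) = pstep (run x k)" by (simp add: run_def)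

lemma run_gen: "1 \<le> x \<Longrightarrow> int k \<le> x \<Longrightarrow> run x k = gen x k"
proof (induction k)
  case 0 then show ?case by (auto simp: run_def init_def gen_def split: var.splits)
next
  case (Suc k)
  then have "run x k = gen x k" by auto
  then show ?case using Suc.prems unfolding run_Suc
    by (auto simp: pstep_def gen_def algebra_simps split: var.splits)
qed

lemma run_X: "run x k X = x"
  by (induction k) (auto simp: run_def init_def pstep_def)

definition progInv :: "(var \<Rightarrow> int) \<Rightarrow> bool" where
"progInv p = (p X > 0 \<and> 0 \<le> p PC \<and> p PC \<le> 3 \<and>
   ((p PC = 0 \<or> p PC = 1) \<longrightarrow> p Z1 \<ge> 0 \<and> p Y1 = (p X - p Z1) * p X \<and> p Z2 = 2 * p X \<and> p Y2 = 0) \<and>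
   (p PC = 2 \<longrightarrow> p Y1 = p X * p X \<and> p Z2 \<ge> 0 \<and> p Y2 = (2 * p X - p Z2) * p X) \<and>
   (p PC = 3 \<longrightarrow> p Y1 = p X * p X \<and> p Y2 = 2 * p X * p X))"

lemma progInv_step: "progInv p \<Longrightarrow> progInv (pstep p)"
  unfolding progInv_def pstep_def by (auto simp: algebra_simps)

lemma progInv_run: "x \<ge> 1 \<Longrightarrow> progInv (run x k)"
  by (induction k) (auto simp: run_Suc progInv_step, auto simp: run_def progInv_def init_def)

lemma progeq_trans: "progeq a b \<Longrightarrow> progeq b c \<Longrightarrow> progeq a c"
  by (simp add: progeq_def)
lemma progeq_pstep: "progeq s p \<Longrightarrow> progeq (pstep s) (pstep p)"
  by (simp add: progeq_def pstep_def)
lemma progeq_refl: "progeq s s" by (simp add: progeq_def)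



lemma holds_FOrs_map: "holds s (FOrs (map f xs)) = (\<exists>x\<in>set xs. holds s (f x))"
  by (induction xs) auto

definition eqst :: "(var \<Rightarrow> int) \<Rightarrow> var qf" where
"eqst p = FAnd (FEq (uv PC) (ic (p PC))) (FAnd (FEq (uv X) (ic (p X))) (FAnd (FEq (uv Z1) (ic (p Z1)))
   (FAnd (FEq (uv Z2) (ic (p Z2))) (FAnd (FEq (uv Y1) (ic (p Y1))) (FEq (uv Y2) (ic (p Y2)))))))"

lemma holds_eqst[simp]: "holds s (eqst p) = progeq s p"
  by (auto simp: eqst_def progeq_def)

definition genf :: "nat \<Rightarrow> var qf" where
"genf k = FAnd (FEq (uv PC) (ic (if k=0 then 0 else 1))) (FAnd (FLe (ic (max 1 (int k))) (uv X))
  (FAnd (FEq (uv Z1) (LAdd (uv X) (ic (- int k)))) (FAnd (FEq (uv Z2) (LMul 2 (uv X)))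
  (FAnd (FEq (uv Y1) (LMul (int k) (uv X))) (FEq (uv Y2) (ic 0))))))"

definition progf :: "nat \<Rightarrow> var qf" where
"progf k = FOr (genf k) (FOrs (map (\<lambda>c. eqst (run (int c) k)) [1..<k]))"

lemma holds_progf: "holds s (progf k) = (\<exists>x\<ge>1. progeq s (run x k))"
proof
  assume "holds s (progf k)"
  then consider "holds s (genf k)" | c where "c \<in> set [1..<k]" "progeq s (run (int c) k)"
    unfolding progf_def holds.simps holds_FOrs_map holds_eqst by blast
  then show "\<exists>x\<ge>1. progeq s (run x k)"
  proof cases
    case 1
    then have "1 \<le> s X" "int k \<le> s X" unfolding genf_def by (simp_all)
    then have "run (s X) k = gen (s X) k" by (rule run_gen)
    moreover have "progeq s (gen (s X) k)" using 1 by (simp add: genf_def progeq_def gen_def)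
    ultimately show ?thesis using \<open>1 \<le> s X\<close> by metis
  next
    case 2 then show ?thesis by (intro exI[of _ "int c"]) auto
  qed
next
  assume "\<exists>x\<ge>1. progeq s (run x k)"
  then obtain x where x: "x \<ge> 1" "progeq s (run x k)" by auto
  then have sx: "s X = x" using run_X by (simp add: progeq_def)
  show "holds s (progf k)"
  proof (cases "int k \<le> x")
    case True
    then have "run x k = gen x k" using x run_gen by auto
    then have "holds s (genf k)" using x True sx by (simp add: genf_def progeq_def gen_def)
    then show ?thesis unfolding progf_def holds.simps by (rule disjI1)
  next
    case False
    then have "nat x \<in> set [1..<k]" using x by auto
    moreover have "holds s (eqst (run (int (nat x)) k))" using x by simp
    ultimately have "\<exists>c\<in>set [1..<k]. holds s (eqst (run (int c) k))" by blast
    then show ?thesis unfolding progf_def holds.simps holds_FOrs_map by (rule disjI2)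
  qed
qed

definition confef :: "nat \<times> (nat \<times> nat) \<Rightarrow> var qf" where
"confef c = FAnd (FEq (uv Q) (ic (int (fst c)))) (FAnd (FEq (uv C1) (ic (int (fst (snd c))))) (FEq (uv C2) (ic (int (snd (snd c))))))"

lemma holds_confef[simp]: "holds s (confef c) = confeq s c"
  by (simp add: confef_def confeq_def)

definition Inv :: "minsky \<Rightarrow> nat \<Rightarrow> var qf" where
"Inv M n = FOrs (map (\<lambda>k. FAnd (confef (cf M k)) (progf k)) [0..<Suc n])"

lemma holds_Inv: "holds s (Inv M n) = (\<exists>k\<le>n. confeq s (cf M k) \<and> (\<exists>x\<ge>1. progeq s (run x k)))"
proof -
  have e: "set [0..<Suc n] = {k. k \<le> n}" by auto
  show ?thesis unfolding Inv_def holds_FOrs_map e holds.simps holds_progf holds_confef mem_Collect_eq by blast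
qed

lemma halting_dir:
  assumes wf: "wf_minsky M" and h: "halts M"
  shows "\<exists>I. inductive_invariant Init_comp (TR_comp M) P_prop I"
proof -
  define n where "n = (LEAST n. fst (cf M n) = mN M)"
  have nh: "fst (cf M n) = mN M" using halts_cf[OF h] unfolding n_def by (rule LeastI_ex)
  have lt: "k < n \<Longrightarrow> fst (cf M k) \<noteq> mN M" for k unfolding n_def by (rule not_less_Least)
  have c1: "valid (FImp Init_comp (Inv M n))"
    unfolding valid_def holds_FImp
  proof (intro allI impI)
    fix s assume h: "holds s Init_comp"
    have h1: "s PC = 0" "s X > 0" "s Z1 = s X" "s Z2 = 2 * s X" "s Y1 = 0" "s Y2 = 0" "s C1 = 0" "s C2 = 0" "s Q = 1"
      using h by (simp_all add: Init_comp_def Init_prog_def)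
    have "confeq s (cf M 0)" using h1 by (simp add: cf_0 confeq_def)
    moreover have "progeq s (run (s X) 0)" using h1 by (simp add: run_def init_def progeq_def)
    moreover have "s X \<ge> 1" using h1 by simp
    ultimately show "holds s (Inv M n)" unfolding holds_Inv by blast
  qed
  have c3: "valid (FImp (Inv M n) P_prop)"
    unfolding valid_def holds_FImp
  proof (intro allI impI)
    fix s assume "holds s (Inv M n)"
    then obtain k x where kx: "x \<ge> 1" "progeq s (run x k)" unfolding holds_Inv by blast
    have pi: "progInv (run x k)" using progInv_run kx(1) by auto
    show "holds s P_prop"
    proof (cases "s PC = 3")
      case True
      then have "run x k PC = 3" using kx(2) by (simp add: progeq_def)
      then have "run x k Y2 = 2 * run x k Y1" using pi unfolding progInv_def by simp
      then show ?thesis using kx(2) by (simp add: P_prop_def progeq_def)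
    next
      case False then show ?thesis by (simp add: P_prop_def)
    qed
  qed
  have c2: "valid (FImp (FAnd (map_qf Cur (Inv M n)) (TR_comp M)) (map_qf Nxt (Inv M n)))"
    unfolding valid_def holds_FImp
  proof (intro allI impI)
    fix ps :: "var primed \<Rightarrow> int"
    assume a: "holds ps (FAnd (map_qf Cur (Inv M n)) (TR_comp M))"
    let ?s = "\<lambda>v. ps (Cur v)" and ?t = "\<lambda>v. ps (Nxt v)"
    from a obtain k x where k: "k \<le> n" "confeq ?s (cf M k)" "x \<ge> 1" "progeq ?s (run x k)"
      by (auto simp: holds_Inv)
    have trp: "holds ps TR_prog" and trm: "holds ps (TR_M M)" and qn: "ps (Cur Q) \<noteq> int (mN M)"
      using a by (auto simp: TR_comp_def)
    have "fst (cf M k) \<noteq> mN M" using qn k(2) by (auto simp: confeq_def)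
    then have kn: "k < n" using k(1) nh by (cases "k = n") auto
    have rng: "1 \<le> fst (cf M k)" "fst (cf M k) < mN M" using cf_range[OF wf, of k] \<open>fst (cf M k) \<noteq> mN M\<close> by auto
    have "confeq ?t (cf M (Suc k))" using TR_M_conv[OF trm k(2) rng] by (simp add: cf_Suc)
    moreover have "progeq ?t (run x (Suc k))"
      using TR_prog_conv[OF trp] progeq_pstep[OF k(4)] unfolding run_Suc comp_def
      by (rule progeq_trans)
    ultimately show "holds ps (map_qf Nxt (Inv M n))" using kn k(3) unfolding holds_map holds_Inv
      by (intro exI[of _ "Suc k"]) auto
  qed
  show ?thesis using c1 c2 c3 unfolding inductive_invariant_def by blast
qed



definition mk :: "minsky \<Rightarrow> (var \<Rightarrow> int) \<Rightarrow> nat \<Rightarrow> var \<Rightarrow> int" where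
"mk M p k = (\<lambda>v. case v of Q \<Rightarrow> int (fst (cf M k)) | C1 \<Rightarrow> int (fst (snd (cf M k)))
    | C2 \<Rightarrow> int (snd (snd (cf M k))) | _ \<Rightarrow> p v)"

lemma confeq_mk: "confeq (mk M p k) (cf M k)" by (simp add: mk_def confeq_def)
lemma progeq_mk: "progeq (mk M p k) p" by (simp add: mk_def progeq_def)
lemma progeq_sym: "progeq a b \<Longrightarrow> progeq b a" by (auto simp: progeq_def)

lemma pstep_pc: "0 \<le> p PC \<Longrightarrow> p PC \<le> 3 \<Longrightarrow> 0 \<le> pstep p PC \<and> pstep p PC \<le> 3"
  by (auto simp: pstep_def)

lemma step_closed:
  assumes inv: "inductive_invariant Init_comp (TR_comp M) P_prop I" and wf: "wf_minsky M" and nh: "\<not> halts M"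
    and h: "holds (mk M p k) I" and pc: "0 \<le> p PC" "p PC \<le> 3"
  shows "holds (mk M (pstep p) (Suc k)) I"
proof -
  define ps where "ps = case_primed (mk M p k) (mk M (pstep p) (Suc k))"
  have cur: "(\<lambda>v. ps (Cur v)) = mk M p k" and nxt: "(\<lambda>v. ps (Nxt v)) = mk M (pstep p) (Suc k)"
    by (simp_all add: ps_def)
  have rng: "1 \<le> fst (cf M k)" "fst (cf M k) < mN M" using cf_range[OF wf, of k] nohalt_cf[OF wf nh, of k] by auto
  have "progeq (mk M (pstep p) (Suc k)) (pstep (mk M p k))"
    by (rule progeq_trans[OF progeq_mk progeq_pstep[OF progeq_sym[OF progeq_mk]]])
  then have t1: "holds ps TR_prog"
    using pc by (intro TR_prog_fwd) (simp_all add: comp_def nxt cur ps_def mk_def)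
  have t2: "holds ps (TR_M M)"
    by (rule TR_M_fwd[OF _ _ rng]) (simp_all add: nxt cur confeq_mk flip: cf_Suc)
  have t3: "ps (Cur Q) \<noteq> int (mN M)" using rng by (simp add: ps_def mk_def)
  have "holds ps (FAnd (map_qf Cur I) (TR_comp M))" using h t1 t2 t3 by (simp add: TR_comp_def cur)
  then have "holds ps (map_qf Nxt I)" using inv unfolding inductive_invariant_def valid_def by auto
  then show ?thesis by (simp add: nxt)
qed

lemma iter_closed:
  assumes inv: "inductive_invariant Init_comp (TR_comp M) P_prop I" and wf: "wf_minsky M" and nh: "\<not> halts M"
    and h: "holds (mk M p k) I" and pc: "0 \<le> p PC" "p PC \<le> 3"
  shows "holds (mk M ((pstep ^^ m) p) (k + m)) I \<and> 0 \<le> (pstep ^^ m) p PC \<and> (pstep ^^ m) p PC \<le> 3"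
proof (induction m)
  case 0 then show ?case using h pc by simp
next
  case (Suc m)
  then show ?case using step_closed[OF inv wf nh, of "(pstep ^^ m) p" "k + m"] pstep_pc[of "(pstep ^^ m) p"] by simp
qed

lemma reach:
  assumes inv: "inductive_invariant Init_comp (TR_comp M) P_prop I" and wf: "wf_minsky M" and nh: "\<not> halts M"
    and x: "x \<ge> 1"
  shows "holds (mk M (run x k) k) I"
proof -
  have "holds (mk M (init x) 0) Init_comp" using x by (simp add: Init_comp_def Init_prog_def mk_def init_def cf_0)
  then have "holds (mk M (init x) 0) I" using inv unfolding inductive_invariant_def valid_def by auto
  from iter_closed[OF inv wf nh this, of k] show ?thesis by (simp add: init_def run_def)
qed


lemma loop1: "p PC = 1 \<Longrightarrow> int m \<le> p Z1 \<Longrightarrow> (pstep ^^ m) p = p(Z1 := p Z1 - int m, Y1 := p Y1 + int m * p X)"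
proof (induction m)
  case 0 then show ?case by (simp add: fun_upd_idem)
next
  case (Suc m)
  have "int m \<le> p Z1" using Suc.prems by simp
  then have ih: "(pstep ^^ m) p = p(Z1 := p Z1 - int m, Y1 := p Y1 + int m * p X)" using Suc.IH Suc.prems(1) by blast
  show ?case
  proof (rule ext)
    fix v show "(pstep ^^ Suc m) p v = (p(Z1 := p Z1 - int (Suc m), Y1 := p Y1 + int (Suc m) * p X)) v"
      using Suc.prems by (cases v) (simp_all add: ih pstep_def algebra_simps)
  qed
qed

lemma loop2: "p PC = 2 \<Longrightarrow> int m \<le> p Z2 \<Longrightarrow> (pstep ^^ m) p = p(Z2 := p Z2 - int m, Y2 := p Y2 + int m * p X)"
proof (induction m)
  case 0 then show ?case by (simp add: fun_upd_idem)
next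
  case (Suc m)
  have "int m \<le> p Z2" using Suc.prems by simp
  then have ih: "(pstep ^^ m) p = p(Z2 := p Z2 - int m, Y2 := p Y2 + int m * p X)" using Suc.IH Suc.prems(1) by blast
  show ?case
  proof (rule ext)
    fix v show "(pstep ^^ Suc m) p v = (p(Z2 := p Z2 - int (Suc m), Y2 := p Y2 + int (Suc m) * p X)) v"
      using Suc.prems by (cases v) (simp_all add: ih pstep_def algebra_simps)
  qed
qed

definition pb :: "int \<Rightarrow> nat \<Rightarrow> var \<Rightarrow> int" where
  "pb x k = (gen x k)(Y1 := int k * x + 1)"

lemma bad_not_in:
  assumes inv: "inductive_invariant Init_comp (TR_comp M) P_prop I" and wf: "wf_minsky M" and nh: "\<not> halts M"
    and k: "k \<ge> 1" "int k \<le> x"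
  shows "\<not> holds (mk M (pb x k) k) I"
proof
  assume h0: "holds (mk M (pb x k) k) I"
  define m1 where "m1 = nat (x - int k)"
  define p1 where "p1 = (pb x k)(Z1 := 0, Y1 := int k * x + 1 + (x - int k) * x)"
  have pbv: "pb x k PC = 1" "pb x k X = x" "pb x k Z1 = x - int k" "pb x k Z2 = 2 * x" "pb x k Y1 = int k * x + 1" "pb x k Y2 = 0"
    using k by (auto simp: pb_def gen_def)
  have e1: "(pstep ^^ m1) (pb x k) = p1"
    using loop1[of "pb x k" m1] pbv k unfolding m1_def p1_def by simp
  have h1: "holds (mk M p1 (k + m1)) I"
    using iter_closed[OF inv wf nh h0, of m1] pbv e1 by auto
  have pc1: "p1 PC = 1" using pbv by (simp add: p1_def)
  define p2 where "p2 = p1(PC := 2)"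
  have e2: "pstep p1 = p2" using pc1 by (simp add: pstep_def p1_def p2_def)
  have h2: "holds (mk M p2 (Suc (k + m1))) I"
    using step_closed[OF inv wf nh h1] pc1 e2 by simp
  define m2 where "m2 = nat (2 * x)"
  define p3 where "p3 = p2(Z2 := 0, Y2 := 2 * x * x)"
  have p2v: "p2 PC = 2" "p2 X = x" "p2 Z2 = 2 * x" "p2 Y2 = 0" by (simp_all add: p2_def p1_def pbv)
  have e3: "(pstep ^^ m2) p2 = p3"
    using loop2[of p2 m2] p2v k unfolding m2_def p3_def by (simp add: algebra_simps)
  have h3: "holds (mk M p3 (Suc (k + m1) + m2)) I"
    using iter_closed[OF inv wf nh h2, of m2] p2v e3 by auto
  have pc3: "p3 PC = 2" using p2v by (simp add: p3_def)
  define p4 where "p4 = p3(PC := 3)"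
  have e4: "pstep p3 = p4" using pc3 by (simp add: pstep_def p3_def p4_def)
  have h4: "holds (mk M p4 (Suc (Suc (k + m1) + m2))) I"
    using step_closed[OF inv wf nh h3] pc3 e4 by simp
  then have "holds (mk M p4 (Suc (Suc (k + m1) + m2))) P_prop"
    using inv unfolding inductive_invariant_def valid_def by auto
  moreover have "p4 PC = 3" "p4 Y2 = 2 * x * x" "p4 Y1 = x * x + 1"
    by (simp_all add: p4_def p3_def p2_def p1_def algebra_simps)
  ultimately show False by (simp add: P_prop_def mk_def algebra_simps)
qed



definition G :: "minsky \<Rightarrow> nat \<Rightarrow> int \<Rightarrow> var \<Rightarrow> int" where "G M k x = mk M (gen x k) k"
definition B :: "minsky \<Rightarrow> nat \<Rightarrow> int \<Rightarrow> var \<Rightarrow> int" where "B M k x = mk M (pb x k) k"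

lemma term_form: "\<exists>a b C. \<forall>k x. tval (G M k x) t = (a + b * int k) * x + C k \<and> tval (B M k x) t = (a + b * int k) * x + C k + b"
proof (induction t)
  case (LVar v)
  show ?case
  proof (cases v)
    case PC then show ?thesis by (intro exI[of _ 0] exI[of _ "\<lambda>k. if k = 0 then 0 else 1"]) (simp add: G_def B_def mk_def gen_def pb_def)
  next
    case X then show ?thesis by (intro exI[of _ 1] exI[of _ 0] exI[of _ "\<lambda>k. 0"]) (simp add: G_def B_def mk_def gen_def pb_def)
  next
    case Z1 then show ?thesis by (intro exI[of _ 1] exI[of _ 0] exI[of _ "\<lambda>k. - int k"]) (simp add: G_def B_def mk_def gen_def pb_def)
  next
    case Z2 then show ?thesis by (intro exI[of _ 2] exI[of _ 0] exI[of _ "\<lambda>k. 0"]) (simp add: G_def B_def mk_def gen_def pb_def)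
  next
    case Y1 then show ?thesis by (intro exI[of _ 0] exI[of _ 1] exI[of _ "\<lambda>k. 0"]) (simp add: G_def B_def mk_def gen_def pb_def)
  next
    case Y2 then show ?thesis by (intro exI[of _ 0] exI[of _ 0] exI[of _ "\<lambda>k. 0"]) (simp add: G_def B_def mk_def gen_def pb_def)
  next
    case C1 then show ?thesis by (intro exI[of _ 0] exI[of _ 0] exI[of _ "\<lambda>k. int (fst (snd (cf M k)))"]) (simp add: G_def B_def mk_def gen_def pb_def)
  next
    case C2 then show ?thesis by (intro exI[of _ 0] exI[of _ 0] exI[of _ "\<lambda>k. int (snd (snd (cf M k)))"]) (simp add: G_def B_def mk_def gen_def pb_def)
  next
    case Q then show ?thesis by (intro exI[of _ 0] exI[of _ 0] exI[of _ "\<lambda>k. int (fst (cf M k))"]) (simp add: G_def B_def mk_def gen_def pb_def)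
  qed
next
  case (LConst c)
  then show ?case by (intro exI[of _ 0] exI[of _ 0] exI[of _ "\<lambda>k. c"]) simp
next
  case (LAdd t1 t2)
  then obtain a1 b1 C1 a2 b2 C2 where
    h1: "\<forall>k x. tval (G M k x) t1 = (a1 + b1 * int k) * x + C1 k \<and> tval (B M k x) t1 = (a1 + b1 * int k) * x + C1 k + b1" and
    h2: "\<forall>k x. tval (G M k x) t2 = (a2 + b2 * int k) * x + C2 k \<and> tval (B M k x) t2 = (a2 + b2 * int k) * x + C2 k + b2"
    by blast
  show ?case using h1 h2
    by (intro exI[of _ "a1 + a2"] exI[of _ "b1 + b2"] exI[of _ "\<lambda>k. C1 k + C2 k"]) (simp add: algebra_simps)
next
  case (LMul c t)
  then obtain a b C where
    h: "\<forall>k x. tval (G M k x) t = (a + b * int k) * x + C k \<and> tval (B M k x) t = (a + b * int k) * x + C k + b"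
    by blast
  show ?case using h
    by (intro exI[of _ "c * a"] exI[of _ "c * b"] exI[of _ "\<lambda>k. c * C k"]) (simp add: algebra_simps)
qed

lemma sgn_big:
  fixes A c b x :: int
  assumes "A \<noteq> 0" "x \<ge> \<bar>c\<bar> + \<bar>b\<bar> + 1"
  shows "sgn (A * x + c) = sgn (A * x + c + b)"
proof (cases "A > 0")
  case True
  then have ax: "A * x \<ge> 1 * x" using assms(2) by (intro mult_right_mono) auto
  have p1: "A * x + c > 0" using ax assms(2) abs_ge_minus_self[of c] abs_ge_zero[of b] by linarith
  have p2: "A * x + c + b > 0" using ax assms(2) abs_ge_minus_self[of c] abs_ge_minus_self[of b] by linarith
  show ?thesis using p1 p2 by simp
next
  case False
  then have "A \<le> -1" using assms(1) by auto
  then have ax: "A * x \<le> (-1) * x" using assms(2) by (intro mult_right_mono) auto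
  have p1: "A * x + c < 0" using ax assms(2) abs_ge_self[of c] abs_ge_zero[of b] by linarith
  have p2: "A * x + c + b < 0" using ax assms(2) abs_ge_self[of c] abs_ge_self[of b] by linarith
  show ?thesis using p1 p2 by simp
qed

lemma sgn_fin:
  fixes a b :: int and C :: "nat \<Rightarrow> int"
  shows "finite {k. \<not> (\<exists>X. \<forall>x\<ge>X. sgn ((a + b * int k) * x + C k) = sgn ((a + b * int k) * x + C k + b))}"
proof -
  have "{k. \<not> (\<exists>X. \<forall>x\<ge>X. sgn ((a + b * int k) * x + C k) = sgn ((a + b * int k) * x + C k + b))}
     \<subseteq> {nat ((- a) div b)}"
  proof
    fix k assume "k \<in> {k. \<not> (\<exists>X. \<forall>x\<ge>X. sgn ((a + b * int k) * x + C k) = sgn ((a + b * int k) * x + C k + b))}"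
    then have nk: "\<not> (\<exists>X. \<forall>x\<ge>X. sgn ((a + b * int k) * x + C k) = sgn ((a + b * int k) * x + C k + b))" by simp
    have b0: "b \<noteq> 0" using nk by auto
    have "a + b * int k = 0"
    proof (rule ccontr)
      assume "a + b * int k \<noteq> 0"
      then have "\<forall>x\<ge>\<bar>C k\<bar> + \<bar>b\<bar> + 1. sgn ((a + b * int k) * x + C k) = sgn ((a + b * int k) * x + C k + b)"
        using sgn_big by blast
      then show False using nk by blast
    qed
    then have "- a = b * int k" by simp
    then have "(- a) div b = int k" using b0 by simp
    then show "k \<in> {nat ((- a) div b)}" by simp
  qed
  then show ?thesis by (rule finite_subset) simp
qed

definition good :: "minsky \<Rightarrow> var qf \<Rightarrow> nat \<Rightarrow> bool" where
  "good M f k = (\<exists>X. \<forall>x\<ge>X. holds (G M k x) f = holds (B M k x) f)"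

lemma sgn_rel: "sgn (u - v) = sgn (u' - (v'::int)) \<Longrightarrow> (u = v \<longleftrightarrow> u' = v') \<and> (u < v \<longleftrightarrow> u' < v') \<and> (u \<le> v \<longleftrightarrow> u' \<le> v')"
  by (auto simp: sgn_if split: if_splits)

lemma atom_fin: "finite {k. \<not> (\<exists>X. \<forall>x\<ge>X. sgn (tval (G M k x) t1 - tval (G M k x) t2) = sgn (tval (B M k x) t1 - tval (B M k x) t2))}"
proof -
  obtain a1 b1 C1 where
    h1: "\<forall>k x. tval (G M k x) t1 = (a1 + b1 * int k) * x + C1 k \<and> tval (B M k x) t1 = (a1 + b1 * int k) * x + C1 k + b1"
    using term_form by blast
  obtain a2 b2 C2 where
    h2: "\<forall>k x. tval (G M k x) t2 = (a2 + b2 * int k) * x + C2 k \<and> tval (B M k x) t2 = (a2 + b2 * int k) * x + C2 k + b2"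
    using term_form by blast
  have e1: "tval (G M k x) t1 - tval (G M k x) t2 = ((a1 - a2) + (b1 - b2) * int k) * x + (C1 k - C2 k)" for k x
    using h1 h2 by (simp add: algebra_simps)
  have e2: "tval (B M k x) t1 - tval (B M k x) t2 = ((a1 - a2) + (b1 - b2) * int k) * x + (C1 k - C2 k) + (b1 - b2)" for k x
    using h1 h2 by (simp add: algebra_simps)
  show ?thesis unfolding e1 e2 by (rule sgn_fin)
qed

lemma good_fin: "finite {k. \<not> good M f k}"
proof (induction f)
  case FTrue then show ?case by (simp add: good_def)
next
  case FFalse then show ?case by (simp add: good_def)
next
  case (FEq t1 t2)
  show ?case by (rule finite_subset[OF _ atom_fin[of M t1 t2]]) (auto simp: good_def dest: sgn_rel)
next
  case (FLt t1 t2)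
  show ?case by (rule finite_subset[OF _ atom_fin[of M t1 t2]]) (auto simp: good_def dest: sgn_rel)
next
  case (FLe t1 t2)
  show ?case by (rule finite_subset[OF _ atom_fin[of M t1 t2]]) (auto simp: good_def dest: sgn_rel)
next
  case (FNot f)
  then show ?case by (simp add: good_def)
next
  case (FAnd f g)
  have "{k. \<not> good M (FAnd f g) k} \<subseteq> {k. \<not> good M f k} \<union> {k. \<not> good M g k}"
  proof (rule subsetI, rule ccontr)
    fix k assume "k \<in> {k. \<not> good M (FAnd f g) k}" "k \<notin> {k. \<not> good M f k} \<union> {k. \<not> good M g k}"
    then obtain X1 X2 where "\<forall>x\<ge>X1. holds (G M k x) f = holds (B M k x) f" "\<forall>x\<ge>X2. holds (G M k x) g = holds (B M k x) g"
      "\<not> good M (FAnd f g) k" by (auto simp: good_def)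
    then show False unfolding good_def by (metis holds.simps(7) max.boundedE)
  qed
  then show ?case using FAnd.IH by (metis finite_Un finite_subset)
next
  case (FOr f g)
  have "{k. \<not> good M (FOr f g) k} \<subseteq> {k. \<not> good M f k} \<union> {k. \<not> good M g k}"
  proof (rule subsetI, rule ccontr)
    fix k assume "k \<in> {k. \<not> good M (FOr f g) k}" "k \<notin> {k. \<not> good M f k} \<union> {k. \<not> good M g k}"
    then obtain X1 X2 where "\<forall>x\<ge>X1. holds (G M k x) f = holds (B M k x) f" "\<forall>x\<ge>X2. holds (G M k x) g = holds (B M k x) g"
      "\<not> good M (FOr f g) k" by (auto simp: good_def)
    then show False unfolding good_def by (metis holds.simps(8) max.boundedE)
  qed
  then show ?case using FOr.IH by (metis finite_Un finite_subset)
qed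


lemma nonhalting_dir:
  assumes wf: "wf_minsky M" and inv: "inductive_invariant Init_comp (TR_comp M) P_prop I"
  shows "halts M"
proof (rule ccontr)
  assume nh: "\<not> halts M"
  define F where "F = {k. \<not> good M I k}"
  have fin: "finite F" unfolding F_def by (rule good_fin)
  define k where "k = Suc (Max (insert 0 F))"
  have "k \<notin> F"
  proof
    assume "k \<in> F"
    then have "k \<le> Max (insert 0 F)" using fin by (intro Max_ge) auto
    then show False unfolding k_def by simp
  qed
  then have "good M I k" unfolding F_def by simp
  then obtain X where X: "\<forall>x\<ge>X. holds (G M k x) I = holds (B M k x) I" unfolding good_def by blast
  define x where "x = max X (int k)"
  have k1: "k \<ge> 1" unfolding k_def by simp
  have x1: "x \<ge> 1" "int k \<le> x" "X \<le> x" using k1 unfolding x_def by auto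
  have "holds (mk M (run x k) k) I" by (rule reach[OF inv wf nh x1(1)])
  then have g: "holds (G M k x) I" using run_gen[OF x1(1) x1(2)] by (simp add: G_def)
  have b: "\<not> holds (B M k x) I" unfolding B_def by (rule bad_not_in[OF inv wf nh k1 x1(2)])
  show False using X x1(3) g b by blast
qed

theorem mainTheorem3:
  fixes M :: minsky
  assumes "wf_minsky M"
  shows "(\<exists>I :: var qf. inductive_invariant Init_comp (TR_comp M) P_prop I) \<longleftrightarrow> halts M"
  using halting_dir[OF assms] nonhalting_dir[OF assms] by blast

end
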